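(* Let $K=(S,L,\to)$ be a Kripke structure and $\mathcal{C}$ a colouring of $S$ such that any two states with the same colour satisfy the same atomic propositions and have the same $\mathcal{C}$-coloured traces of length two. Then $\mathcal{C}$ is consistent.
   Context: Fix a set $\mathbf{AP}$ of atomic propositions. A Kripke structure is $K=(S,L,\to)$ with $L:S\to\mathcal{P}(\mathbf{AP})$ and $\to\subseteq S\times S$ (not necessarily total); a state $s$ satisfies $p\in\mathbf{AP}$ iff $p\in L(s)$. A finite path from $s$ is a sequence $s_0,\dots,s_n$ with $s_0=s$ and $s_k\to s_{k+1}$; an infinite path is defined analogously. A colouring is a function $\mathcal{C}$ from $S$ into an arbitrary set of colours. For a path $\pi=s_0,s_1,\dots$, $\mathcal{C}(\pi)$ is obtained from $\mathcal{C}(s_0),\mathcal{C}(s_1),\dots$ by contracting each maximal (finite or infinite) block of consecutive equal colours to a single colour; for $\pi$ a path from $s$, $\mathcal{C}(\pi)$ is a $\mathcal{C}$-coloured trace of $s$, and its length is its number of entries. $\mathcal{C}$ is consistent if any two states of the same colour satisfy the same atomic propositions and have the same (finite and infinite) $\mathcal{C}$-coloured traces. *)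

theory Defs
  imports Main "HOL-Library.Infinite_Set"
begin

text \<open>A Kripke structure is given by a labelling L :: 's => 'ap set and a
transition relation R :: 's => 's => bool (not necessarily total).
A colouring is any function C :: 's => 'c.\<close>

datatype 'c ctrace = FinT "'c list" | InfT "nat \<Rightarrow> 'c"

definition fin_path :: "('s \<Rightarrow> 's \<Rightarrow> bool) \<Rightarrow> 's \<Rightarrow> 's list \<Rightarrow> bool" where
  "fin_path R s xs \<longleftrightarrow> xs \<noteq> [] \<and> hd xs = s \<and>
     (\<forall>i. Suc i < length xs \<longrightarrow> R (xs ! i) (xs ! Suc i))"

definition inf_path :: "('s \<Rightarrow> 's \<Rightarrow> bool) \<Rightarrow> 's \<Rightarrow> (nat \<Rightarrow> 's) \<Rightarrow> bool" where
  "inf_path R s p \<longleftrightarrow> p 0 = s \<and> (\<forall>i. R (p i) (p (Suc i)))"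

text \<open>Contraction of an infinite colour sequence: each maximal block of equal
consecutive colours (possibly an infinite final block) becomes one colour.\<close>
definition contract_inf :: "(nat \<Rightarrow> 'c) \<Rightarrow> 'c ctrace" where
  "contract_inf f =
    (let changes = {i. f (Suc i) \<noteq> f i} in
     if finite changes then
       FinT (remdups_adj (map f [0..<Suc (if changes = {} then 0 else Suc (Max changes))]))
     else
       InfT (\<lambda>k. f (enumerate {i. i = 0 \<or> (\<exists>j. i = Suc j \<and> f i \<noteq> f j)} k)))"

definition ctraces :: "('s \<Rightarrow> 's \<Rightarrow> bool) \<Rightarrow> ('s \<Rightarrow> 'c) \<Rightarrow> 's \<Rightarrow> 'c ctrace set" where
  "ctraces R C s =
     {FinT (remdups_adj (map C xs)) | xs. fin_path R s xs}
     \<union> {contract_inf (C \<circ> p) | p. inf_path R s p}"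

fun ctrace_len :: "'c ctrace \<Rightarrow> nat option" where
  "ctrace_len (FinT l) = Some (length l)"
| "ctrace_len (InfT f) = None"

definition consistent :: "('s \<Rightarrow> 'ap set) \<Rightarrow> ('s \<Rightarrow> 's \<Rightarrow> bool) \<Rightarrow> ('s \<Rightarrow> 'c) \<Rightarrow> bool" where
  "consistent L R C \<longleftrightarrow>
     (\<forall>s t. C s = C t \<longrightarrow> L s = L t \<and> ctraces R C s = ctraces R C t)"

end

theory Submission
  imports Defs
begin


lemma ra_const:
  assumes "\<forall>x\<in>set xs. x = a" "xs \<noteq> []" "ys \<noteq> []" "hd ys \<noteq> a"
  shows "remdups_adj (xs @ ys) = a # remdups_adj ys"
  using assms
proof (induction xs)
  case Nil then show ?case by simp
next
  case (Cons x xs)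
  show ?case
  proof (cases xs)
    case Nil
    with Cons.prems show ?thesis by (cases ys) (auto simp: remdups_adj_Cons split: list.splits)
  next
    case (Cons y zs)
    with Cons.prems Cons.IH show ?thesis by (auto simp: remdups_adj_Cons)
  qed
qed

lemma ra_prefix: "\<exists>zs. remdups_adj (xs @ ys) = remdups_adj xs @ zs"
proof (cases "xs = [] \<or> ys = []")
  case True then show ?thesis by auto
next
  case False
  then obtain xs1 x y ys' where "xs = xs1 @ [x]" "ys = y # ys'"
    by (metis list.exhaust rev_exhaust)
  then show ?thesis using remdups_adj_append[of xs1 x "y#ys'"] by auto
qed

lemma ra_snoc_const:
  assumes "xs \<noteq> []" "\<forall>y\<in>set ys. y = b" "ys \<noteq> []" "last xs \<noteq> b"
  shows "remdups_adj (xs @ ys) = remdups_adj xs @ [b]"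
proof -
  obtain xs1 x where x: "xs = xs1 @ [x]" using assms(1) by (metis rev_exhaust)
  have "remdups_adj (x # ys) = x # remdups_adj ys"
    using ra_const[of "[x]" x ys] assms x by (cases ys) auto
  moreover have "remdups_adj ys = [b]"
    using assms(2,3) replicate_length_same[of ys b] remdups_adj_replicate[of "length ys" b]
    by auto
  ultimately show ?thesis using remdups_adj_append[of xs1 x ys] x by simp
qed

lemma fin_path_single[simp]: "fin_path R u [u]"
  by (simp add: fin_path_def)

lemma fin_path_cons2: "fin_path R u (u # y # ys) \<longleftrightarrow> R u y \<and> fin_path R y (y # ys)"
  apply (simp add: fin_path_def)
  apply (auto simp: less_Suc_eq_0_disj)
  done

lemma fin_path_cons_hd: "fin_path R u (x # ys) \<Longrightarrow> x = u"
  by (simp add: fin_path_def)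

lemma fin_path_append:
  "fin_path R u (xs @ [v]) \<Longrightarrow> fin_path R v (v # ys) \<Longrightarrow> fin_path R u (xs @ v # ys)"
proof (induction xs arbitrary: u)
  case Nil then show ?case by (simp add: fin_path_def)
next
  case (Cons x xs)
  have xu: "x = u" using Cons.prems(1) by (simp add: fin_path_def)
  show ?case
  proof (cases xs)
    case Nil
    then show ?thesis using Cons.prems xu by (cases ys) (auto simp: fin_path_cons2)
  next
    case (Cons y zs)
    then show ?thesis using Cons.prems Cons.IH[of y] xu by (auto simp: fin_path_cons2)
  qed
qed

lemma inf_path_prefix:
  assumes "inf_path R s p" "a \<le> b"
  shows "fin_path R (p a) (map p [a..<Suc b])"
  using assms unfolding fin_path_def inf_path_def
  by (auto simp: hd_map nth_append simp del: upt_Suc)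



definition goodseg where
  "goodseg R C u c xs v \<longleftrightarrow> xs \<noteq> [] \<and> hd xs = u \<and> (\<forall>x\<in>set xs. C x = C u) \<and> C v = c
     \<and> fin_path R u (xs @ [v])"

lemma extract_seg:
  "fin_path R u ys \<Longrightarrow> remdups_adj (map C ys) = [a, c] \<Longrightarrow> \<exists>xs v. goodseg R C u c xs v"
proof (induction ys arbitrary: u)
  case Nil then show ?case by (simp add: fin_path_def)
next
  case (Cons y ys)
  have yu: "y = u" using Cons.prems(1) by (simp add: fin_path_def)
  show ?case
  proof (cases ys)
    case Nil then show ?thesis using Cons.prems by simp
  next
    case (Cons z zs)
    have Rz: "R u z" and fz: "fin_path R z (z # zs)"
      using Cons.prems(1) yu Cons by (auto simp: fin_path_cons2)
    show ?thesis
    proof (cases "C z = C u")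
      case True
      then have "remdups_adj (map C ys) = [a, c]" using Cons.prems(2) yu Cons by simp
      then obtain xs v where g: "goodseg R C z c xs v" using Cons.IH fz Cons by blast
      have "goodseg R C u c (u # xs) v"
        using g True Rz unfolding goodseg_def
        by (cases xs) (auto simp: fin_path_cons2 dest: fin_path_cons_hd)
      then show ?thesis by blast
    next
      case False
      then have "remdups_adj (map C (u # z # zs)) = C u # remdups_adj (map C (z # zs))"
        by simp
      with Cons.prems(2) yu Cons have "remdups_adj (map C (z # zs)) = [c]" by simp
      then have "C z = c" by (metis hd_remdups_adj list.sel(1) list.simps(9))
      then have "goodseg R C u c [u] z" using Rz unfolding goodseg_def by (simp add: fin_path_cons2)
      then show ?thesis by blast
    qed
  qed
qed

lemma contract_fin:
  "contract_inf f = FinT l \<Longrightarrow> \<exists>n. l = remdups_adj (map f [0..<Suc n])"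
  unfolding contract_inf_def Let_def
  by (auto split: if_splits simp del: upt_Suc intro: exI[of _ 0] exI[of _ "Suc (Max {i. f (Suc i) \<noteq> f i})"])

lemma fin_trace_from_inf:
  assumes "inf_path R s p" "contract_inf (C \<circ> p) = FinT l"
  shows "\<exists>xs. fin_path R s xs \<and> l = remdups_adj (map C xs)"
proof -
  obtain n where "l = remdups_adj (map (C \<circ> p) [0..<Suc n])" using contract_fin assms(2) by blast
  moreover have "fin_path R s (map p [0..<Suc n])"
    using inf_path_prefix[OF assms(1), of 0 n] assms(1) by (simp add: inf_path_def)
  ultimately show ?thesis by (metis map_map)
qed

lemma ctraces_FinT:
  "FinT l \<in> ctraces R C s \<longleftrightarrow> (\<exists>xs. fin_path R s xs \<and> l = remdups_adj (map C xs))"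
  unfolding ctraces_def using fin_trace_from_inf by fastforce

lemma segment:
  assumes H: "\<forall>s t. C s = C t \<longrightarrow>
             L s = L t \<and>
             {tr \<in> ctraces R C s. ctrace_len tr = Some 2} = {tr \<in> ctraces R C t. ctrace_len tr = Some 2}"
    and "C u = C w" "fin_path R w ws" "remdups_adj (map C ws) = [C w, c]"
  shows "\<exists>xs v. goodseg R C u c xs v"
proof -
  have "FinT [C w, c] \<in> {tr \<in> ctraces R C w. ctrace_len tr = Some 2}"
    using assms(3,4) ctraces_FinT[of "[C w, c]" R C w] by auto
  then have "FinT [C w, c] \<in> ctraces R C u" using H assms(2) by blast
  then obtain ys where "fin_path R u ys" "[C w, c] = remdups_adj (map C ys)"
    using ctraces_FinT by metis
  then show ?thesis using extract_seg by metis
qed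

lemma fin_sim:
  assumes H: "\<forall>s t. C s = C t \<longrightarrow>
             L s = L t \<and>
             {tr \<in> ctraces R C s. ctrace_len tr = Some 2} = {tr \<in> ctraces R C t. ctrace_len tr = Some 2}"
  shows "fin_path R s xs \<Longrightarrow> C t = C s \<Longrightarrow> \<exists>ys. fin_path R t ys \<and> remdups_adj (map C ys) = remdups_adj (map C xs)"
proof (induction xs arbitrary: s t)
  case Nil then show ?case by (simp add: fin_path_def)
next
  case (Cons x xs)
  have xs_: "x = s" using Cons.prems(1) by (simp add: fin_path_def)
  show ?case
  proof (cases xs)
    case Nil
    then show ?thesis using Cons.prems xs_ by (intro exI[of _ "[t]"]) auto
  next
    case (Cons y zs)
    have Ry: "R s y" and fy: "fin_path R y (y # zs)"
      using Cons.prems(1) xs_ Cons by (auto simp: fin_path_cons2)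
    show ?thesis
    proof (cases "C y = C s")
      case True
      then obtain ys where "fin_path R t ys" "remdups_adj (map C ys) = remdups_adj (map C xs)"
        using Cons.IH[OF fy[folded Cons]] Cons.prems(2) by auto
      then show ?thesis using True xs_ Cons by auto
    next
      case False
      have "fin_path R s [s, y]" using Ry by (simp add: fin_path_cons2)
      moreover have "remdups_adj (map C [s, y]) = [C s, C y]" using False by simp
      ultimately obtain ws v where g: "goodseg R C t (C y) ws v"
        using segment[OF H, of t s "[s,y]" "C y"] Cons.prems(2) by auto
      then obtain vs where vs: "fin_path R v vs" "remdups_adj (map C vs) = remdups_adj (map C xs)"
        using Cons.IH[OF fy[folded Cons], of v] unfolding goodseg_def by auto
      obtain vs' where vs': "vs = v # vs'" using vs(1) by (cases vs) (auto simp: fin_path_def)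
      have p: "fin_path R t (ws @ vs)" using g vs vs' fin_path_append unfolding goodseg_def by metis
      have "remdups_adj (map C ws @ map C vs) = C t # remdups_adj (map C vs)"
        apply (rule ra_const)
        using g vs' False Cons.prems(2) unfolding goodseg_def by auto
      moreover have "remdups_adj (map C (x # xs)) = C s # remdups_adj (map C xs)"
        using xs_ Cons False by simp
      ultimately show ?thesis using p vs(2) Cons.prems(2) by (intro exI[of _ "ws @ vs"]) simp
    qed
  qed
qed



definition EE :: "(nat \<Rightarrow> 'c) \<Rightarrow> nat set" where
  "EE f = {i. i = 0 \<or> (\<exists>j. i = Suc j \<and> f i \<noteq> f j)}"
definition ee where "ee f = enumerate (EE f)"
definition gg where "gg f k = f (ee f k)"

lemma upt_split0: "a \<le> b \<Longrightarrow> [0..<b] = [0..<a] @ [a..<b]"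
  using upt_add_eq_append[of 0 a "b-a"] by simp

lemma contract_infT: "infinite {i. f (Suc i) \<noteq> f i} \<Longrightarrow> contract_inf f = InfT (gg f)"
  unfolding contract_inf_def gg_def ee_def EE_def Let_def by simp

lemma EE_inf: assumes "infinite {i. f (Suc i) \<noteq> f i}" shows "infinite (EE f)"
proof -
  have "Suc ` {i. f (Suc i) \<noteq> f i} \<subseteq> EE f" unfolding EE_def by auto
  moreover have "infinite (Suc ` {i. f (Suc i) \<noteq> f i})"
    using assms finite_imageD inj_Suc by (metis inj_on_subset subset_UNIV)
  ultimately show ?thesis using finite_subset by blast
qed

lemma ee0: "ee f 0 = 0"
  unfolding ee_def EE_def by (simp add: enumerate_0 Least_eq_0)

lemma ee_between:
  assumes "infinite {i. f (Suc i) \<noteq> f i}" "ee f k < i" "i < ee f (Suc k)"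
  shows "i \<notin> EE f"
proof
  assume "i \<in> EE f"
  then obtain n where n: "ee f n = i" using enumerate_Ex EE_inf[OF assms(1)] unfolding ee_def by metis
  have I: "infinite (EE f)" using EE_inf[OF assms(1)] .
  from assms(2) n have "k < n" using enumerate_mono_iff[OF I] unfolding ee_def by metis
  moreover from assms(3) n have "n < Suc k" using enumerate_mono_iff[OF I] unfolding ee_def by metis
  ultimately show False by simp
qed

lemma block:
  assumes "infinite {i. f (Suc i) \<noteq> f i}" "ee f k \<le> i" "i < ee f (Suc k)"
  shows "f i = f (ee f k)"
  using assms(2,3)
proof (induction i)
  case 0 then show ?case by simp
next
  case (Suc i)
  show ?case
  proof (cases "ee f k = Suc i")
    case True then show ?thesis by simp
  next
    case False
    then have "ee f k \<le> i" "ee f k < Suc i" using Suc.prems by auto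
    then have "Suc i \<notin> EE f" using ee_between[OF assms(1), of k "Suc i"] Suc.prems(2) by blast
    then have "f (Suc i) = f i" unfolding EE_def by blast
    moreover have "f i = f (ee f k)" using Suc.IH \<open>ee f k \<le> i\<close> Suc.prems(2) by linarith
    ultimately show ?thesis by simp
  qed
qed

lemma gg_neq:
  assumes "infinite {i. f (Suc i) \<noteq> f i}"
  shows "gg f (Suc k) \<noteq> gg f k"
proof -
  have I: "infinite (EE f)" using EE_inf[OF assms] .
  have lt: "ee f k < ee f (Suc k)" using enumerate_step[OF I] unfolding ee_def by blast
  have "ee f (Suc k) \<in> EE f" using enumerate_in_set[OF I] unfolding ee_def by blast
  then obtain j where j: "ee f (Suc k) = Suc j" "f (Suc j) \<noteq> f j" using lt unfolding EE_def by auto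
  have "f j = f (ee f k)" using block[OF assms, of k j] j lt by simp
  then show ?thesis using j unfolding gg_def by simp
qed

lemma seg_contract:
  assumes "infinite {i. f (Suc i) \<noteq> f i}"
  shows "remdups_adj (map f [ee f k..<Suc (ee f (Suc k))]) = [gg f k, gg f (Suc k)]"
proof -
  have I: "infinite (EE f)" using EE_inf[OF assms] .
  have lt: "ee f k < ee f (Suc k)" using enumerate_step[OF I] unfolding ee_def by blast
  have "map f [ee f k..<Suc (ee f (Suc k))] = map f [ee f k..<ee f (Suc k)] @ [f (ee f (Suc k))]"
    using upt_Suc_append[of "ee f k" "ee f (Suc k)"] lt by (simp del: upt_Suc)
  moreover have "remdups_adj (map f [ee f k..<ee f (Suc k)] @ [f (ee f (Suc k))])
     = gg f k # remdups_adj [f (ee f (Suc k))]"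
  proof (rule ra_const)
    show "\<forall>x\<in>set (map f [ee f k..<ee f (Suc k)]). x = gg f k"
    proof
      fix x assume "x \<in> set (map f [ee f k..<ee f (Suc k)])"
      then obtain i where "ee f k \<le> i" "i < ee f (Suc k)" "x = f i" by auto
      then show "x = gg f k" using block[OF assms, of k i] unfolding gg_def by simp
    qed
    show "map f [ee f k..<ee f (Suc k)] \<noteq> []" using lt by simp
    show "hd [f (ee f (Suc k))] \<noteq> gg f k" using gg_neq[OF assms, of k] unfolding gg_def by simp
  qed simp
  moreover have "gg f (Suc k) = f (ee f (Suc k))" by (simp only: gg_def)
  ultimately show ?thesis by (simp del: upt_Suc)
qed

lemma prefixP:
  assumes "infinite {i. f (Suc i) \<noteq> f i}"
  shows "remdups_adj (map f [0..<Suc (ee f k)]) = map (gg f) [0..<Suc k]"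
proof (induction k)
  case 0 then show ?case by (simp add: ee0 gg_def)
next
  case (Suc k)
  have I: "infinite (EE f)" using EE_inf[OF assms] .
  have lt: "ee f k < ee f (Suc k)" using enumerate_step[OF I] unfolding ee_def by blast
  have sp: "[0..<Suc (ee f (Suc k))] = [0..<ee f k] @ ee f k # [Suc (ee f k)..<Suc (ee f (Suc k))]"
    using lt upt_split0[of "ee f k" "Suc (ee f (Suc k))"] by (simp add: upt_conv_Cons del: upt_Suc)
  have sp2: "[ee f k..<Suc (ee f (Suc k))] = ee f k # [Suc (ee f k)..<Suc (ee f (Suc k))]"
    using lt by (simp add: upt_conv_Cons)
  have "remdups_adj (map f [0..<Suc (ee f (Suc k))])
     = remdups_adj (map f [0..<ee f k] @ [f (ee f k)]) @ tl (remdups_adj (map f [ee f k..<Suc (ee f (Suc k))]))"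
    unfolding sp sp2 using remdups_adj_append by (simp del: upt_Suc)
  also have "\<dots> = map (gg f) [0..<Suc k] @ [gg f (Suc k)]"
    using Suc.IH seg_contract[OF assms, of k] by simp
  finally show ?case by simp
qed

lemma gg_unique:
  assumes "infinite {i. f1 (Suc i) \<noteq> f1 i}" "infinite {i. f2 (Suc i) \<noteq> f2 i}"
    and "\<forall>k. \<exists>m. remdups_adj (map f2 [0..<m]) = map (gg f1) [0..<Suc k]"
  shows "gg f2 = gg f1"
proof
  fix i
  obtain m where m: "remdups_adj (map f2 [0..<m]) = map (gg f1) [0..<Suc i]" using assms(3) by blast
  have I: "infinite (EE f2)" using EE_inf[OF assms(2)] .
  have "m \<le> ee f2 m" using le_enumerate[OF I] unfolding ee_def by blast
  then have "[0..<Suc (ee f2 m)] = [0..<m] @ [m..<Suc (ee f2 m)]"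
    using upt_split0[of m "Suc (ee f2 m)"] by (simp del: upt_Suc)
  then obtain zs where "map (gg f2) [0..<Suc m] = map (gg f1) [0..<Suc i] @ zs"
    using prefixP[OF assms(2), of m] ra_prefix[of "map f2 [0..<m]" "map f2 [m..<Suc (ee f2 m)]"] m
    by auto
  then have e: "map (gg f2) [0..<Suc m] ! i = (map (gg f1) [0..<Suc i] @ zs) ! i" by simp
  have "length (map (gg f2) [0..<Suc m]) = Suc i + length zs"
    using arg_cong[OF \<open>map (gg f2) [0..<Suc m] = _\<close>, of length] by (simp del: upt_Suc)
  then have "i < Suc m" by simp
  then show "gg f2 i = gg f1 i" using e by (simp add: nth_append del: upt_Suc)
qed



lemma concat_path:
  assumes G: "\<forall>k. goodseg R C (U k) (g (Suc k)) (seg k) (U (Suc k))"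
    and CU: "\<forall>k. C (U k) = g k" and gn: "\<forall>k. g (Suc k) \<noteq> g k"
    and Qd: "Q = (\<lambda>k. concat (map seg [0..<k]))" and qd: "q = (\<lambda>n. Q (Suc n) ! n)"
  shows "inf_path R (U 0) q \<and> infinite {i. (C \<circ> q) (Suc i) \<noteq> (C \<circ> q) i}
     \<and> (\<forall>k. remdups_adj (map (C \<circ> q) [0..<length (Q (Suc k))]) = map g [0..<Suc k])"
proof -
  have segne: "seg k \<noteq> []" for k using G unfolding goodseg_def by blast
  have QS: "Q (Suc k) = Q k @ seg k" for k unfolding Qd by simp
  have Q0: "Q 0 = []" unfolding Qd by simp
  have lenQ: "k \<le> length (Q k)" for k
  proof (induction k)
    case 0 then show ?case by simp
  next
    case (Suc k) then show ?case using QS[of k] segne[of k] by (cases "seg k") auto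
  qed
  have Qmono: "k \<le> m \<Longrightarrow> \<exists>zs. Q m = Q k @ zs" for k m
  proof (induction m)
    case 0 then show ?case by simp
  next
    case (Suc m)
    show ?case
    proof (cases "k = Suc m")
      case True then show ?thesis by simp
    next
      case False
      then obtain zs where "Q m = Q k @ zs" using Suc by auto
      then show ?thesis using QS[of m] by auto
    qed
  qed
  have qQ: "n < length (Q m) \<Longrightarrow> q n = Q m ! n" for n m
  proof (cases "Suc n \<le> m")
    case True
    assume "n < length (Q m)"
    obtain zs where "Q m = Q (Suc n) @ zs" using Qmono[OF True] by blast
    moreover have "n < length (Q (Suc n))" using lenQ[of "Suc n"] by simp
    ultimately show ?thesis unfolding qd by (simp add: nth_append)
  next
    case False
    assume a: "n < length (Q m)"
    obtain zs where "Q (Suc n) = Q m @ zs" using Qmono[of m "Suc n"] False by auto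
    then show ?thesis using a unfolding qd by (simp add: nth_append)
  qed
  have qpos: "i < length (seg k) \<Longrightarrow> q (length (Q k) + i) = seg k ! i" for i k
    using qQ[of "length (Q k) + i" "Suc k"] QS[of k] by (simp add: nth_append)
  have allc: "\<forall>x\<in>set (seg k). C x = g k" for k using G CU unfolding goodseg_def by metis
  have contr: "remdups_adj (map C (Q (Suc k))) = map g [0..<Suc k]" for k
  proof (induction k)
    case 0
    have "map C (seg 0) = replicate (length (map C (seg 0))) (g 0)"
      using allc[of 0] replicate_length_same[of "map C (seg 0)" "g 0"] by auto
    then have "remdups_adj (map C (seg 0)) = [g 0]"
      using segne[of 0] remdups_adj_replicate by (metis length_0_conv length_map)
    then show ?case using QS[of 0] Q0 by simp
  next
    case (Suc k)
    have l: "last (map C (Q (Suc k))) = g k"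
      using QS[of k] segne[of k] allc[of k] by (simp add: last_map)
    have "remdups_adj (map C (Q (Suc k)) @ map C (seg (Suc k))) = remdups_adj (map C (Q (Suc k))) @ [g (Suc k)]"
      apply (rule ra_snoc_const)
      using segne[of k] segne[of "Suc k"] QS[of k] allc[of "Suc k"] l gn[rule_format, of k] by auto
    then show ?case using Suc.IH QS[of "Suc k"] by (simp del: upt_Suc add: upt_Suc_append)
  qed
  have mapq: "map q [0..<length (Q k)] = Q k" for k
    by (rule nth_equalityI) (simp_all add: qQ)
  have exb: "\<exists>k. length (Q k) \<le> n \<and> n < length (Q (Suc k))" for n
  proof (induction n)
    case 0 then show ?case using QS[of 0] Q0 segne[of 0] by (intro exI[of _ 0]) simp
  next
    case (Suc n)
    then obtain k where k: "length (Q k) \<le> n" "n < length (Q (Suc k))" by blast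
    show ?case
    proof (cases "Suc n < length (Q (Suc k))")
      case True then show ?thesis using k by (intro exI[of _ k]) simp
    next
      case False
      moreover have "length (seg (Suc k)) > 0" using segne[of "Suc k"] by simp
      moreover have "length (Q (Suc (Suc k))) = length (Q (Suc k)) + length (seg (Suc k))" using QS[of "Suc k"] by simp
      ultimately have "length (Q (Suc k)) \<le> Suc n \<and> Suc n < length (Q (Suc (Suc k)))" using k by linarith
      then show ?thesis by blast
    qed
  qed
  have hdseg: "seg k ! 0 = U k" for k using G segne[of k] hd_conv_nth[of "seg k"] unfolding goodseg_def by metis
  have step: "R (q n) (q (Suc n))" for n
  proof -
    obtain k where k: "length (Q k) \<le> n" "n < length (Q (Suc k))" using exb by blast
    define i where "i = n - length (Q k)"
    have n: "n = length (Q k) + i" and il: "i < length (seg k)" using k QS[of k] unfolding i_def by auto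
    define Lk where "Lk = seg k @ [U (Suc k)]"
    have fp: "fin_path R (U k) Lk" using G unfolding goodseg_def Lk_def by blast
    have qn: "q n = Lk ! i" using qpos[OF il] n il unfolding Lk_def by (simp add: nth_append)
    have qSn: "q (Suc n) = Lk ! Suc i"
    proof (cases "Suc i < length (seg k)")
      case True then show ?thesis using qpos[OF True] n unfolding Lk_def by (simp add: nth_append)
    next
      case False
      then have si: "Suc i = length (seg k)" using il by simp
      have "Suc n = length (Q (Suc k)) + 0" using n si QS[of k] by simp
      then have "q (Suc n) = seg (Suc k) ! 0" using qpos[of 0 "Suc k"] segne[of "Suc k"] by simp
      then show ?thesis using hdseg si unfolding Lk_def by (simp add: nth_append)
    qed
    have "Suc i < length Lk" using il unfolding Lk_def by simp
    then show ?thesis using fp qn qSn unfolding fin_path_def by simp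
  qed
  have q0: "q 0 = U 0" using qpos[of 0 0] segne[of 0] Q0 hdseg[of 0] by simp
  have chg: "length (Q k) + (length (seg k) - 1) \<in> {i. (C \<circ> q) (Suc i) \<noteq> (C \<circ> q) i}" for k
  proof -
    let ?n = "length (Q k) + (length (seg k) - 1)"
    have a: "q ?n = seg k ! (length (seg k) - 1)" using qpos[of "length (seg k) - 1" k] segne[of k] by simp
    have "seg k ! (length (seg k) - 1) \<in> set (seg k)" using segne[of k] by simp
    then have ca: "C (q ?n) = g k" using a allc[of k] by simp
    have "Suc ?n = length (Q (Suc k)) + 0" using QS[of k] segne[of k] by (cases "seg k") auto
    then have "q (Suc ?n) = U (Suc k)" using qpos[of 0 "Suc k"] segne[of "Suc k"] hdseg by simp
    then have "C (q (Suc ?n)) = g (Suc k)" using CU by simp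
    then show ?thesis using ca gn by simp
  qed
  have inf: "infinite {i. (C \<circ> q) (Suc i) \<noteq> (C \<circ> q) i}"
    unfolding infinite_nat_iff_unbounded_le
  proof
    fix m
    show "\<exists>n\<ge>m. n \<in> {i. (C \<circ> q) (Suc i) \<noteq> (C \<circ> q) i}"
      using chg[of m] lenQ[of m] by (intro exI[of _ "length (Q m) + (length (seg m) - 1)"]) auto
  qed
  have "remdups_adj (map (C \<circ> q) [0..<length (Q (Suc k))]) = map g [0..<Suc k]" for k
    using contr[of k] mapq[of "Suc k"] by (metis map_map)
  then show ?thesis using step q0 inf unfolding inf_path_def by blast
qed



fun Useq :: "('s \<Rightarrow> 'c \<Rightarrow> 's list \<times> 's) \<Rightarrow> (nat \<Rightarrow> 'c) \<Rightarrow> 's \<Rightarrow> nat \<Rightarrow> 's" where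
  "Useq nx g t 0 = t"
| "Useq nx g t (Suc k) = snd (nx (Useq nx g t k) (g (Suc k)))"

lemma inf_sim:
  assumes H: "\<forall>s t. C s = C t \<longrightarrow>
             L s = L t \<and>
             {tr \<in> ctraces R C s. ctrace_len tr = Some 2} = {tr \<in> ctraces R C t. ctrace_len tr = Some 2}"
    and p: "inf_path R s p" and inf: "infinite {i. (C \<circ> p) (Suc i) \<noteq> (C \<circ> p) i}"
    and ct: "C t = C s"
  shows "\<exists>q. inf_path R t q \<and> contract_inf (C \<circ> q) = contract_inf (C \<circ> p)"
proof -
  define f where "f = C \<circ> p"
  define g where "g = gg f"
  have inff: "infinite {i. f (Suc i) \<noteq> f i}" using inf unfolding f_def .
  have I: "infinite (EE f)" using EE_inf[OF inff] .
  have ex: "\<exists>xs v. goodseg R C u (g (Suc k)) xs v" if "C u = g k" for u k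
  proof -
    have le: "ee f k \<le> ee f (Suc k)" using enumerate_step[OF I] unfolding ee_def by (simp add: less_imp_le)
    have fp: "fin_path R (p (ee f k)) (map p [ee f k..<Suc (ee f (Suc k))])"
      using inf_path_prefix[OF p le] .
    have "remdups_adj (map f [ee f k..<Suc (ee f (Suc k))]) = [g k, g (Suc k)]"
      using seg_contract[OF inff, of k] unfolding g_def .
    then have "remdups_adj (map C (map p [ee f k..<Suc (ee f (Suc k))])) = [g k, g (Suc k)]"
      unfolding f_def map_map .
    moreover have "C (p (ee f k)) = g k" unfolding g_def gg_def f_def by simp
    ultimately show ?thesis using segment[OF H, of u "p (ee f k)" _ "g (Suc k)"] fp that by metis
  qed
  define nx where "nx = (\<lambda>u c. SOME xv. goodseg R C u c (fst xv) (snd xv))"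
  define U where "U = Useq nx g t"
  define seg where "seg = (\<lambda>k. fst (nx (U k) (g (Suc k))))"
  have inv: "C (U k) = g k \<and> goodseg R C (U k) (g (Suc k)) (seg k) (U (Suc k))" for k
  proof (induction k)
    case 0
    have c0: "C (U 0) = g 0" using ct p unfolding U_def g_def gg_def f_def inf_path_def by (simp add: ee0)
    obtain xs v where "goodseg R C (U 0) (g (Suc 0)) xs v" using ex[OF c0] by blast
    then have "goodseg R C (U 0) (g (Suc 0)) (fst (nx (U 0) (g (Suc 0)))) (snd (nx (U 0) (g (Suc 0))))"
      unfolding nx_def by (rule someI[where P = "\<lambda>xv. goodseg R C (U 0) (g (Suc 0)) (fst xv) (snd xv)" and x = "(xs, v)", simplified])
    then show ?case using c0 unfolding seg_def U_def by simp
  next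
    case (Suc k)
    have c: "C (U (Suc k)) = g (Suc k)" using Suc.IH unfolding goodseg_def by blast
    obtain xs v where "goodseg R C (U (Suc k)) (g (Suc (Suc k))) xs v" using ex[OF c] by blast
    then have "goodseg R C (U (Suc k)) (g (Suc (Suc k))) (fst (nx (U (Suc k)) (g (Suc (Suc k))))) (snd (nx (U (Suc k)) (g (Suc (Suc k)))))"
      unfolding nx_def by (rule someI[where P = "\<lambda>xv. goodseg R C (U (Suc k)) (g (Suc (Suc k))) (fst xv) (snd xv)" and x = "(xs, v)", simplified])
    then show ?case using c unfolding seg_def U_def by simp
  qed
  define Q where "Q = (\<lambda>k. concat (map seg [0..<k]))"
  define q where "q = (\<lambda>n. Q (Suc n) ! n)"
  have gn: "\<forall>k. g (Suc k) \<noteq> g k" using gg_neq[OF inff] unfolding g_def by blast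
  have cp: "inf_path R (U 0) q \<and> infinite {i. (C \<circ> q) (Suc i) \<noteq> (C \<circ> q) i}
     \<and> (\<forall>k. remdups_adj (map (C \<circ> q) [0..<length (Q (Suc k))]) = map g [0..<Suc k])"
    by (rule concat_path[where seg = seg and U = U]) (use inv gn Q_def q_def in auto)
  have "gg (C \<circ> q) = gg f"
    apply (rule gg_unique[OF inff])
    using cp unfolding g_def by blast+
  then have "contract_inf (C \<circ> q) = contract_inf (C \<circ> p)"
    using contract_infT[of "C \<circ> q"] contract_infT[of f] cp inff unfolding f_def by simp
  moreover have "U 0 = t" unfolding U_def by simp
  ultimately show ?thesis using cp by metis
qed

lemma ctr_sub:
  assumes H: "\<forall>s t. C s = C t \<longrightarrow>
             L s = L t \<and>
             {tr \<in> ctraces R C s. ctrace_len tr = Some 2} = {tr \<in> ctraces R C t. ctrace_len tr = Some 2}"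
    and ct: "C t = C s"
  shows "ctraces R C s \<subseteq> ctraces R C t"
proof
  fix tr assume tr: "tr \<in> ctraces R C s"
  have fin: "FinT (remdups_adj (map C xs)) \<in> ctraces R C t" if fx: "fin_path R s xs" for xs
  proof -
    obtain ys where "fin_path R t ys" "remdups_adj (map C ys) = remdups_adj (map C xs)"
      using fin_sim[OF H fx ct] by blast
    then show ?thesis using ctraces_FinT by metis
  qed
  from tr show "tr \<in> ctraces R C t"
  proof (cases tr)
    case (FinT l)
    then obtain xs where "fin_path R s xs" "l = remdups_adj (map C xs)" using tr ctraces_FinT by metis
    then show ?thesis using fin FinT by simp
  next
    case (InfT h)
    then obtain p where p: "inf_path R s p" "contract_inf (C \<circ> p) = InfT h"
      using tr unfolding ctraces_def by auto
    have "infinite {i. (C \<circ> p) (Suc i) \<noteq> (C \<circ> p) i}"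
      using p(2) unfolding contract_inf_def Let_def by (auto split: if_splits)
    then obtain q where "inf_path R t q" "contract_inf (C \<circ> q) = contract_inf (C \<circ> p)"
      using inf_sim[OF H p(1) _ ct] by blast
    then have "InfT h = contract_inf (C \<circ> q) \<and> inf_path R t q" using p by simp
    then show ?thesis using InfT unfolding ctraces_def by blast
  qed
qed

theorem lemma2p5:
  fixes L :: "'s \<Rightarrow> 'ap set" and R :: "'s \<Rightarrow> 's \<Rightarrow> bool" and C :: "'s \<Rightarrow> 'c"
  assumes "\<forall>s t. C s = C t \<longrightarrow>
             L s = L t \<and>
             {tr \<in> ctraces R C s. ctrace_len tr = Some 2} = {tr \<in> ctraces R C t. ctrace_len tr = Some 2}"
  shows "consistent L R C"
  unfolding consistent_def
proof (intro allI impI conjI)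
  fix s t assume "C s = C t"
  then show "L s = L t" using assms by blast
  show "ctraces R C s = ctraces R C t"
    using ctr_sub[OF assms, of s t] ctr_sub[OF assms, of t s] \<open>C s = C t\<close> by auto
qed

end
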